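(* Consider a solution $(s(t),x(t),o(t))$, $t\ge0$, of the networked SIR epidemic-opinion model described in the context, under the standing assumption stated there. For all $t\ge0$, $$R_{\min}(t)\le R_o(t)\le R_{\max}(t),$$ where $R_o(t)=\rho\big(G(o(t))^{-1}\tilde S(t)B(o(t))\big)$, $R_{\min}(t)=\rho\big(G(\mathbf 1_n)^{-1}\tilde S(t)B(\mathbf 1_n)\big)$ and $R_{\max}(t)=\rho\big(G(\mathbf 0)^{-1}\tilde S(t)B(\mathbf 0)\big)$.
   Context: There are $n$ communities. For $t\ge0$ and $i\in[n]$, $s_i(t),x_i(t),o_i(t)\in[0,1]$ denote the susceptible proportion, infected proportion and opinion of community $i$. The disease transmission network is a directed graph $\mathcal G=(\mathcal V,\mathcal E)$ on $n$ nodes with edge weights $\beta_{ij}>0$ if $(v_j,v_i)\in\mathcal E$ (and $\beta_{ij}=0$ otherwise); $\mathcal N_i=\{v_j:(v_j,v_i)\in\mathcal E\}$. The opinion network is a directed graph $\bar{\mathcal G}$ on the same nodes with nonnegative weights $\bar a_{ij}$ and Laplacian $\bar L=\mathrm{diag}(k_1,\dots,k_n)-\bar A$, $[\bar A]_{ij}=\bar a_{ij}$, $k_i=\sum_j\bar a_{ij}$. For $o\in[0,1]^n$ define the matrix $B(o)$ by $[B(o)]_{ij}=\beta_{ij}-(\beta_{ij}-\beta_{\min})o_i$ for $j\in\mathcal N_i$ and $0$ otherwise, and the diagonal matrix $G(o)$ with $[G(o)]_{ii}=\gamma_{\min}+(\gamma_i-\gamma_{\min})o_i$. Let $\tilde S(t)=\mathrm{diag}(s(t))$.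 The model is $\dot s=-\tilde S B(o)x$, $\dot x=\tilde S B(o)x-G(o)x$, $\dot o=(\mathbf 1_n-s)-(\bar L+I_n)o$. Standing assumption: for all $i$, $s_i(0),x_i(0),o_i(0)\in[0,1]$ with $s_i(0)+x_i(0)\le1$, $\gamma_i\ge\gamma_{\min}>0$, $\beta_{ij}\ge\beta_{\min}>0$ for all $j\in\mathcal N_i$, and $\mathcal G$, $\bar{\mathcal G}$ strongly connected. $\rho(\cdot)$ denotes spectral radius. *)

theory Defs
  imports "Jordan_Normal_Form.Spectral_Radius"
begin

text \<open>Nodes are 0..n-1. An edge (v_j, v_i) of a weighted digraph with weight
  function w (w i j = weight of the edge from v_j to v_i) exists iff w i j > 0.\<close>

definition edges :: "nat \<Rightarrow> (nat \<Rightarrow> nat \<Rightarrow> real) \<Rightarrow> (nat \<times> nat) set" where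
  "edges n w = {(j, i). j < n \<and> i < n \<and> w i j > 0}"

definition strongly_connected :: "nat \<Rightarrow> (nat \<Rightarrow> nat \<Rightarrow> real) \<Rightarrow> bool" where
  "strongly_connected n w \<longleftrightarrow> (\<forall>i<n. \<forall>j<n. (i, j) \<in> (edges n w)\<^sup>*)"

definition Bmat :: "nat \<Rightarrow> (nat \<Rightarrow> nat \<Rightarrow> real) \<Rightarrow> real \<Rightarrow> (nat \<Rightarrow> real) \<Rightarrow> real mat" where
  "Bmat n \<beta> \<beta>min opn = mat n n (\<lambda>(i, j). if \<beta> i j > 0 then \<beta> i j - (\<beta> i j - \<beta>min) * opn i else 0)"

definition Gmat :: "nat \<Rightarrow> (nat \<Rightarrow> real) \<Rightarrow> real \<Rightarrow> (nat \<Rightarrow> real) \<Rightarrow> real mat" where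
  "Gmat n \<gamma> \<gamma>min opn = mat_diag n (\<lambda>i. \<gamma>min + (\<gamma> i - \<gamma>min) * opn i)"

definition Ginv :: "nat \<Rightarrow> (nat \<Rightarrow> real) \<Rightarrow> real \<Rightarrow> (nat \<Rightarrow> real) \<Rightarrow> real mat" where
  "Ginv n \<gamma> \<gamma>min opn = mat_diag n (\<lambda>i. 1 / (\<gamma>min + (\<gamma> i - \<gamma>min) * opn i))"

definition rho :: "real mat \<Rightarrow> real" where
  "rho A = spectral_radius (map_mat complex_of_real A)"

definition Rrep :: "nat \<Rightarrow> (nat \<Rightarrow> nat \<Rightarrow> real) \<Rightarrow> real \<Rightarrow> (nat \<Rightarrow> real) \<Rightarrow> real
    \<Rightarrow> (nat \<Rightarrow> real) \<Rightarrow> (nat \<Rightarrow> real) \<Rightarrow> real" where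
  "Rrep n \<beta> \<beta>min \<gamma> \<gamma>min s opn = rho (Ginv n \<gamma> \<gamma>min opn * mat_diag n s * Bmat n \<beta> \<beta>min opn)"

end

theory Submission imports Defs "HOL-Analysis.Elementary_Metric_Spaces" begin


lemma pos_inv:
  fixes y y' :: "real \<Rightarrow> nat \<Rightarrow> real" and n :: nat
  assumes der: "\<forall>t\<ge>0. \<forall>i<n. ((\<lambda>\<tau>. y \<tau> i) has_real_derivative y' t i) (at t within {0..})"
  and init: "\<forall>i<n. 0 \<le> y 0 i"
  and cond: "\<forall>T\<ge>0. \<exists>K\<ge>0. \<forall>t\<in>{0..T}. \<forall>i<n. \<forall>c>0. (\<forall>j<n. -c \<le> y t j) \<longrightarrow> y t i = -c \<longrightarrow> -K*c \<le> y' t i"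
  and T: "0 \<le> T" and i: "i<n"
  shows "0 \<le> y T i"
proof (rule ccontr)
  assume neg: "\<not> 0 \<le> y T i"
  obtain K where K0: "K \<ge> 0" and K: "\<forall>t\<in>{0..T}. \<forall>i<n. \<forall>c>0. (\<forall>j<n. -c \<le> y t j) \<longrightarrow> y t i = -c \<longrightarrow> -K*c \<le> y' t i"
    using cond T by blast
  define L where "L = K + 1"
  define e where "e = - y T i / (2 * exp (L*T))"
  have eps: "e > 0" using neg by (simp add: e_def divide_neg_pos)
  define w where "w t j = y t j + e * exp (L*t)" for t j
  have wT: "w T i < 0"
  proof -
    have "e * exp (L*T) = - y T i / 2" unfolding e_def by simp
    then show ?thesis unfolding w_def using neg by simp
  qed
  have contj0: "continuous_on {0..} (\<lambda>t. w t j)" if j: "j<n" for j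
  proof -
    have "continuous_on {0..} (\<lambda>t. y t j)"
      unfolding continuous_on_eq_continuous_within
    proof
      fix x :: real assume x: "x \<in> {0..}"
      then show "continuous (at x within {0..}) (\<lambda>t. y t j)"
        using der j by (intro DERIV_continuous) auto
    qed
    then show ?thesis unfolding w_def by (intro continuous_intros)
  qed
  have contj: "continuous_on {0..T} (\<lambda>t. w t j)" if j: "j<n" for j
    using contj0[OF j] by (rule continuous_on_subset) auto
  define S where "S = {t\<in>{0..T}. \<exists>j<n. w t j \<le> 0}"
  have S_eq: "S = (\<Union>j\<in>{..<n}. (\<lambda>t. w t j) -` {..0} \<inter> {0..T})" by (auto simp: S_def)
  have clS: "closed S" unfolding S_eq
    by (intro closed_UN finite_lessThan ballI closed_vimage_Int contj) auto
  have TS: "T \<in> S" using wT i T unfolding S_def by auto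
  have bdd: "bdd_below S" unfolding S_def by (rule bdd_belowI[of _ 0]) auto
  define \<tau> where "\<tau> = Inf S"
  have tauS: "\<tau> \<in> S" unfolding \<tau>_def using closed_contains_Inf[OF _ bdd clS] TS by blast
  have tauT: "0 \<le> \<tau>" "\<tau> \<le> T" using tauS unfolding S_def by auto
  have before: "\<forall>j<n. w t j > 0" if "0 \<le> t" "t < \<tau>" for t
  proof -
    have "t \<notin> S" using cInf_lower[OF _ bdd, of t] that unfolding \<tau>_def by force
    then show ?thesis using that tauT unfolding S_def by force
  qed
  have tau_pos: "\<tau> > 0"
  proof (rule ccontr)
    assume "\<not> \<tau> > 0"
    then have "\<tau> = 0" using tauT by auto
    then have "\<exists>j<n. w 0 j \<le> 0" using tauS unfolding S_def by auto
    moreover have "w 0 j > 0" if "j<n" for j using init that eps unfolding w_def by (simp add: add_nonneg_pos)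
    ultimately show False by force
  qed
  obtain i1 where i1: "i1 < n" "w \<tau> i1 \<le> 0" using tauS unfolding S_def by auto
  have geq: "w \<tau> j \<ge> 0" if j: "j<n" for j
  proof -
    have "continuous_on {0..\<tau>} (\<lambda>t. w t j)"
      using contj0[OF j] by (rule continuous_on_subset) auto
    then have "continuous (at \<tau> within {0..\<tau>}) (\<lambda>t. w t j)"
      using tauT by (simp add: continuous_on_eq_continuous_within)
    then have "((\<lambda>t. w t j) \<longlongrightarrow> w \<tau> j) (at_left \<tau>)"
      using at_within_Icc_at_left[OF tau_pos] by (simp add: continuous_within)
    moreover have "\<forall>\<^sub>F t in at_left \<tau>. 0 \<le> w t j"
      using eventually_at_left_real[OF tau_pos] 
      by (rule eventually_mono) (use before j in \<open>auto intro: less_imp_le\<close>)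
    ultimately show ?thesis using tendsto_lowerbound trivial_limit_at_left_real by blast
  qed
  have wi1: "w \<tau> i1 = 0" using i1 geq by force
  define c where "c = e * exp (L*\<tau>)"
  have c0: "c > 0" using eps unfolding c_def by simp
  have yi1: "y \<tau> i1 = -c" using wi1 unfolding w_def c_def by simp
  have yj: "\<forall>j<n. -c \<le> y \<tau> j" using geq unfolding w_def c_def by (metis add.commute le_add_same_cancel1 le_diff_eq minus_add_cancel)
  have Kc: "-K*c \<le> y' \<tau> i1" using K tauT i1 c0 yi1 yj by auto
  define D where "D = y' \<tau> i1 + e * (exp (L*\<tau>) * L)"
  have Dpos: "D > 0"
  proof -
    have "D = y' \<tau> i1 + L * c" unfolding D_def c_def by simp
    also have "\<dots> \<ge> -K*c + (K+1)*c" using Kc unfolding L_def by simp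
    finally show ?thesis using c0 by (simp add: algebra_simps)
  qed
  have "((\<lambda>t. w t i1) has_real_derivative D) (at \<tau> within {0..})"
    unfolding w_def D_def
    using der tauT i1
    by (intro derivative_eq_intros) auto
  then have "((\<lambda>t. (w t i1 - w \<tau> i1) / (t - \<tau>)) \<longlongrightarrow> D) (at \<tau> within {0..\<tau>})"
    unfolding has_field_derivative_iff by (rule tendsto_within_subset) auto
  then have lim: "((\<lambda>t. (w t i1 - w \<tau> i1) / (t - \<tau>)) \<longlongrightarrow> D) (at_left \<tau>)"
    using at_within_Icc_at_left[OF tau_pos] by simp
  have "\<forall>\<^sub>F t in at_left \<tau>. (w t i1 - w \<tau> i1) / (t - \<tau>) \<le> 0"
    using eventually_at_left_real[OF tau_pos]
  proof (rule eventually_mono)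
    fix t assume "t \<in> {0<..<\<tau>}"
    then have "w t i1 > 0" "t - \<tau> < 0" using before i1 by auto
    then show "(w t i1 - w \<tau> i1) / (t - \<tau>) \<le> 0" using wi1 by (simp add: divide_pos_neg less_imp_le)
  qed
  then have "D \<le> 0" using tendsto_upperbound[OF lim] trivial_limit_at_left_real by blast
  then show False using Dpos by simp
qed



lemma pow_mat_Suc_left: assumes A: "A \<in> carrier_mat n n"
  shows "A ^\<^sub>m Suc k = A * A ^\<^sub>m k"
proof (induct k)
  case 0
  then show ?case using A by simp
next
  case (Suc k)
  have "A ^\<^sub>m Suc (Suc k) = (A * A ^\<^sub>m k) * A" using Suc by simp
  also have "\<dots> = A * (A ^\<^sub>m k * A)" using A by (intro assoc_mult_mat) auto
  finally show ?case by simp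
qed

lemma mult_mat_vec_sum: assumes "A \<in> carrier_mat n n" "u \<in> carrier_vec n" "i < n"
  shows "(A *\<^sub>v u) $ i = (\<Sum>j<n. A $$ (i,j) * u $ j)"
  using assms by (auto simp: scalar_prod_def lessThan_atLeast0 intro!: sum.cong)

lemma rho_ge:
  fixes B :: "real mat" and u :: "real vec"
  assumes B: "B \<in> carrier_mat n n" and Bnn: "\<forall>i<n. \<forall>j<n. 0 \<le> B $$ (i,j)"
  and u: "u \<in> carrier_vec n" and unn: "\<forall>i<n. 0 \<le> u $ i" and i0: "i0 < n" "u $ i0 > 0"
  and mu: "\<mu> > 0" and ineq: "\<forall>i<n. \<mu> * u $ i \<le> (B *\<^sub>v u) $ i"
  shows "\<mu> \<le> rho B"
proof (rule ccontr)
  assume "\<not> \<mu> \<le> rho B"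
  then have lt: "rho B < \<mu>" by simp
  have n: "n > 0" using i0 by simp
  define Bc where "Bc = map_mat complex_of_real B"
  have Bc: "Bc \<in> carrier_mat n n" using B unfolding Bc_def by simp
  have rB: "rho B = spectral_radius Bc" unfolding rho_def Bc_def by simp
  have rB0: "0 \<le> rho B" using spectral_radius_mem_max(1)[OF Bc n] rB by auto
  define r where "r = (rho B + \<mu>) / 2"
  have r: "rho B < r" "r < \<mu>" "r > 0" using lt rB0 unfolding r_def by auto
  define C where "C = (1/r) \<cdot>\<^sub>m B"
  have C: "C \<in> carrier_mat n n" using B unfolding C_def by simp
  define Cc where "Cc = map_mat complex_of_real C"
  have Cc: "Cc \<in> carrier_mat n n" using C unfolding Cc_def by simp
  have srC: "spectral_radius Cc < 1"
  proof -
    obtain \<nu> where nu: "\<nu> \<in> spectrum Cc" "spectral_radius Cc = norm \<nu>"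
      using spectral_radius_mem_max(1)[OF Cc n] by auto
    then obtain v where v: "v \<in> carrier_vec n" "v \<noteq> 0\<^sub>v n" "Cc *\<^sub>v v = \<nu> \<cdot>\<^sub>v v"
      unfolding spectrum_def eigenvalue_def eigenvector_def using Cc by auto
    have "Bc *\<^sub>v v = (complex_of_real r * \<nu>) \<cdot>\<^sub>v v"
    proof (rule eq_vecI)
      fix i assume "i < dim_vec ((complex_of_real r * \<nu>) \<cdot>\<^sub>v v)"
      then have i: "i < n" using v by simp
      have "(Bc *\<^sub>v v) $ i = (\<Sum>j<n. Bc $$ (i,j) * v $ j)" by (rule mult_mat_vec_sum[OF Bc v(1) i])
      also have "\<dots> = (\<Sum>j<n. complex_of_real r * (Cc $$ (i,j) * v $ j))"
        using i B r(3) by (intro sum.cong) (auto simp: Bc_def Cc_def C_def)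
      also have "\<dots> = complex_of_real r * (Cc *\<^sub>v v) $ i"
        by (simp add: mult_mat_vec_sum[OF Cc v(1) i] sum_distrib_left)
      also have "\<dots> = ((complex_of_real r * \<nu>) \<cdot>\<^sub>v v) $ i" using v(3) i v(1) by simp
      finally show "(Bc *\<^sub>v v) $ i = ((complex_of_real r * \<nu>) \<cdot>\<^sub>v v) $ i" .
    qed (use v Bc in auto)
    then have "complex_of_real r * \<nu> \<in> spectrum Bc"
      unfolding spectrum_def eigenvalue_def eigenvector_def using v Bc by auto
    then have "norm (complex_of_real r * \<nu>) \<le> rho B"
      using spectral_radius_mem_max(2)[OF Bc n] rB by auto
    then have h: "r * norm \<nu> \<le> rho B" using r by (simp add: norm_mult)
    have "r * norm \<nu> < r * 1" using h r by linarith
    then have "norm \<nu> < 1" using r(3) by (simp only: mult_less_cancel_left_pos)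
    then show ?thesis using nu by simp
  qed
  obtain c where c: "\<And>k. norm_bound (Cc ^\<^sub>m k) c"
    using spectral_radius_jnf_norm_bound_less_1_upper_triangular[OF Cc srC] by auto
  have Ck: "\<bar>(C ^\<^sub>m k) $$ (i,j)\<bar> \<le> c" if "i<n" "j<n" for k i j
  proof -
    have "Cc ^\<^sub>m k = map_mat complex_of_real (C ^\<^sub>m k)"
      unfolding Cc_def by (rule of_real_hom.mat_hom_pow[OF C, symmetric])
    then have "norm (complex_of_real ((C ^\<^sub>m k) $$ (i,j))) \<le> c"
      using c[of k] that C unfolding norm_bound_def by (metis index_map_mat(1) pow_mat_dim_square carrier_matD(1) carrier_matD(2) index_map_mat(2) index_map_mat(3))
    then show ?thesis by simp
  qed
  define q where "q = \<mu> / r"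
  have q1: "q > 1" using r unfolding q_def by simp
  have Cnn: "\<forall>i<n. \<forall>j<n. 0 \<le> C $$ (i,j)" using Bnn B r(3) unfolding C_def by auto
  have Cu: "q * u $ i \<le> (C *\<^sub>v u) $ i" if i: "i<n" for i
  proof -
    have "(C *\<^sub>v u) $ i = (1/r) * (B *\<^sub>v u) $ i"
      using mult_mat_vec_sum[OF C u i] mult_mat_vec_sum[OF B u i] B i
      by (simp add: C_def sum_distrib_left mult.assoc)
    moreover have "q * u $ i = (1/r) * (\<mu> * u $ i)" unfolding q_def by simp
    ultimately show ?thesis using ineq i r(3) by (simp add: divide_right_mono)
  qed
  have grow: "\<forall>i<n. q ^ k * u $ i \<le> (C ^\<^sub>m k *\<^sub>v u) $ i" for k
  proof (induct k)
    case 0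
    then show ?case using u C by simp
  next
    case (Suc k)
    show ?case
    proof (intro allI impI)
      fix i assume i: "i < n"
      have eq: "C ^\<^sub>m Suc k *\<^sub>v u = C *\<^sub>v (C ^\<^sub>m k *\<^sub>v u)"
        unfolding pow_mat_Suc_left[OF C] using C u by (intro assoc_mult_mat_vec) auto
      have cv: "C ^\<^sub>m k *\<^sub>v u \<in> carrier_vec n" using C u by (metis mult_mat_vec_carrier pow_carrier_mat)
      have "(C ^\<^sub>m Suc k *\<^sub>v u) $ i = (\<Sum>j<n. C $$ (i,j) * (C ^\<^sub>m k *\<^sub>v u) $ j)"
        unfolding eq by (rule mult_mat_vec_sum[OF C cv i])
      also have "\<dots> \<ge> (\<Sum>j<n. C $$ (i,j) * (q ^ k * u $ j))"
        using Suc Cnn i by (intro sum_mono mult_left_mono) auto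
      finally have "(C ^\<^sub>m Suc k *\<^sub>v u) $ i \<ge> q ^ k * (C *\<^sub>v u) $ i"
        using mult_mat_vec_sum[OF C u i] by (simp add: sum_distrib_left algebra_simps)
      moreover have "q ^ k * (C *\<^sub>v u) $ i \<ge> q ^ k * (q * u $ i)"
        using Cu[OF i] q1 by (intro mult_left_mono) auto
      ultimately show "q ^ Suc k * u $ i \<le> (C ^\<^sub>m Suc k *\<^sub>v u) $ i" by (simp add: algebra_simps)
    qed
  qed
  define M where "M = c * (\<Sum>j<n. u $ j)"
  have upper: "(C ^\<^sub>m k *\<^sub>v u) $ i0 \<le> M" for k
  proof -
    have "(C ^\<^sub>m k *\<^sub>v u) $ i0 = (\<Sum>j<n. (C ^\<^sub>m k) $$ (i0,j) * u $ j)"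
      using mult_mat_vec_sum[OF pow_carrier_mat[OF C] u i0(1)] .
    also have "\<dots> \<le> (\<Sum>j<n. c * u $ j)"
      using Ck[of i0 _ k] i0 unn by (intro sum_mono mult_right_mono) (auto simp: abs_le_iff)
    finally show ?thesis unfolding M_def by (simp add: sum_distrib_left)
  qed
  obtain k where "M / u $ i0 < q ^ k" using real_arch_pow[OF q1] by blast
  then have "M < q ^ k * u $ i0" using i0 by (simp add: divide_less_eq)
  also have "\<dots> \<le> M" using grow[of k] upper[of k] i0 by force
  finally show False by simp
qed

lemma rho_mono:
  fixes A B :: "real mat"
  assumes A: "A \<in> carrier_mat n n" and B: "B \<in> carrier_mat n n" and n: "n > 0"
  and Ann: "\<forall>i<n. \<forall>j<n. 0 \<le> A $$ (i,j)" and AB: "\<forall>i<n. \<forall>j<n. A $$ (i,j) \<le> B $$ (i,j)"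
  shows "rho A \<le> rho B"
proof -
  define Ac where "Ac = map_mat complex_of_real A"
  have Ac: "Ac \<in> carrier_mat n n" using A unfolding Ac_def by simp
  define Bc where "Bc = map_mat complex_of_real B"
  have Bc: "Bc \<in> carrier_mat n n" using B unfolding Bc_def by simp
  have rB0: "0 \<le> rho B" using spectral_radius_mem_max(1)[OF Bc n] unfolding rho_def Bc_def by auto
  obtain lam where lam: "lam \<in> spectrum Ac" "rho A = norm lam"
    using spectral_radius_mem_max(1)[OF Ac n] unfolding rho_def Ac_def by auto
  show ?thesis
  proof (cases "norm lam = 0")
    case True
    then show ?thesis using lam rB0 by simp
  next
    case False
    then have mu: "norm lam > 0" by simp
    obtain v where v: "v \<in> carrier_vec n" "v \<noteq> 0\<^sub>v n" "Ac *\<^sub>v v = lam \<cdot>\<^sub>v v"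
      using lam unfolding spectrum_def eigenvalue_def eigenvector_def using Ac by auto
    obtain i0 where i0: "i0 < n" "v $ i0 \<noteq> 0" using v(1,2) by (metis eq_vecI carrier_vecD index_zero_vec(1) index_zero_vec(2))
    define u where "u = vec n (\<lambda>i. norm (v $ i))"
    have u: "u \<in> carrier_vec n" unfolding u_def by simp
    have ineq: "\<forall>i<n. norm lam * u $ i \<le> (B *\<^sub>v u) $ i"
    proof (intro allI impI)
      fix i assume i: "i < n"
      have "norm lam * u $ i = norm ((Ac *\<^sub>v v) $ i)" using v i unfolding u_def by (simp add: norm_mult)
      also have "\<dots> = norm (\<Sum>j<n. Ac $$ (i,j) * v $ j)" using mult_mat_vec_sum[OF Ac v(1) i] by simp
      also have "\<dots> \<le> (\<Sum>j<n. norm (Ac $$ (i,j) * v $ j))" by (rule norm_sum)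
      also have "\<dots> = (\<Sum>j<n. A $$ (i,j) * u $ j)"
        using i A Ann unfolding Ac_def u_def by (intro sum.cong) (auto simp: norm_mult)
      also have "\<dots> \<le> (\<Sum>j<n. B $$ (i,j) * u $ j)"
        using i AB unfolding u_def by (intro sum_mono mult_right_mono) auto
      also have "\<dots> = (B *\<^sub>v u) $ i" using mult_mat_vec_sum[OF B u i] by simp
      finally show "norm lam * u $ i \<le> (B *\<^sub>v u) $ i" .
    qed
    have "norm lam \<le> rho B"
    proof (rule rho_ge[OF B _ u _ i0(1) _ mu ineq])
      show "\<forall>i<n. \<forall>j<n. 0 \<le> B $$ (i, j)" using Ann AB by (meson order_trans)
      show "\<forall>i<n. 0 \<le> u $ i" unfolding u_def by simp
      show "0 < u $ i0" unfolding u_def using i0 by simp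
    qed
    then show ?thesis using lam by simp
  qed
qed



lemma bnd:
  fixes F :: "real \<Rightarrow> nat \<Rightarrow> real"
  assumes "\<forall>i<n. continuous_on {0..T} (\<lambda>t. F t i)"
  shows "\<exists>K\<ge>0. \<forall>t\<in>{0..T}. \<forall>i<n. \<bar>F t i\<bar> \<le> K"
proof -
  have "continuous_on {0..T} (\<lambda>t. \<Sum>i<n. \<bar>F t i\<bar>)" using assms by (intro continuous_intros) auto
  then have "compact ((\<lambda>t. \<Sum>i<n. \<bar>F t i\<bar>) ` {0..T})" by (intro compact_continuous_image compact_Icc)
  then obtain B where B: "\<forall>y\<in>(\<lambda>t. \<Sum>i<n. \<bar>F t i\<bar>) ` {0..T}. norm y \<le> B"
    using compact_imp_bounded bounded_iff by metis
  show ?thesis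
  proof (intro exI[of _ "max B 0"] conjI ballI allI impI)
    fix t i assume t: "t \<in> {0..T}" and i: "i < n"
    have "\<bar>F t i\<bar> \<le> (\<Sum>i<n. \<bar>F t i\<bar>)" using i by (intro member_le_sum) auto
    also have "\<dots> \<le> B" using B t by force
    finally show "\<bar>F t i\<bar> \<le> max B 0" by simp
  qed simp
qed

lemma deriv_cont:
  assumes "\<forall>t\<ge>0. \<forall>i<n. ((\<lambda>\<tau>. y \<tau> i) has_real_derivative D t i) (at t within {0..})" "i < n"
  shows "continuous_on {0..} (\<lambda>t. y t i)"
  unfolding continuous_on_eq_continuous_within
proof
  fix x :: real assume x: "x \<in> {0..}"
  then show "continuous (at x within {0..}) (\<lambda>t. y t i)"
    using assms by (intro DERIV_continuous) auto
qed

lemma entry_mono: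
  fixes a b g gmin bt bmin s :: real
  assumes ab: "0 \<le> a" "a \<le> b" "b \<le> 1" and g: "0 < gmin" "gmin \<le> g"
    and bm: "0 < bmin" and bt: "bt = 0 \<or> bmin \<le> bt" and s: "0 \<le> s"
  shows "0 \<le> 1 / (gmin + (g - gmin) * b) * s * (if bt > 0 then bt - (bt - bmin) * b else 0)
     \<and> 1 / (gmin + (g - gmin) * b) * s * (if bt > 0 then bt - (bt - bmin) * b else 0)
       \<le> 1 / (gmin + (g - gmin) * a) * s * (if bt > 0 then bt - (bt - bmin) * a else 0)"
proof (cases "bt > 0")
  case False
  then show ?thesis by simp
next
  case True
  then have btm: "bmin \<le> bt" using bt by auto
  have Da: "0 < gmin + (g - gmin) * a" using g ab by (simp add: add_pos_nonneg)
  have DaDb: "gmin + (g - gmin) * a \<le> gmin + (g - gmin) * b" using g ab by (simp add: mult_left_mono)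
  have Nb: "bmin \<le> bt - (bt - bmin) * b"
  proof -
    have "(bt - bmin) * b \<le> (bt - bmin) * 1" using btm ab by (intro mult_left_mono) auto
    then show ?thesis by simp
  qed
  have NbNa: "bt - (bt - bmin) * b \<le> bt - (bt - bmin) * a" using btm ab by (simp add: mult_left_mono)
  have "(bt - (bt - bmin) * b) / (gmin + (g - gmin) * b) \<le> (bt - (bt - bmin) * a) / (gmin + (g - gmin) * a)"
    using Nb NbNa Da DaDb bm by (intro frac_le) auto
  then have "s * ((bt - (bt - bmin) * b) / (gmin + (g - gmin) * b)) \<le> s * ((bt - (bt - bmin) * a) / (gmin + (g - gmin) * a))"
    using s by (intro mult_left_mono) auto
  moreover have "0 \<le> s * ((bt - (bt - bmin) * b) / (gmin + (g - gmin) * b))"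
    using s Nb bm Da DaDb by (intro mult_nonneg_nonneg divide_nonneg_nonneg) auto
  ultimately show ?thesis using True by (simp add: field_simps)
qed

theorem corollary1:
  fixes n :: nat
    and \<beta> :: "nat \<Rightarrow> nat \<Rightarrow> real" and \<beta>min :: real
    and \<gamma> :: "nat \<Rightarrow> real" and \<gamma>min :: real
    and abar :: "nat \<Rightarrow> nat \<Rightarrow> real"
    and s x opn :: "real \<Rightarrow> nat \<Rightarrow> real"
  assumes n_pos: "0 < n"
    and beta_min_pos: "0 < \<beta>min"
    and beta_cases: "\<forall>i<n. \<forall>j<n. \<beta> i j = 0 \<or> \<beta>min \<le> \<beta> i j"
    and gamma_min_pos: "0 < \<gamma>min"
    and gamma_ge: "\<forall>i<n. \<gamma>min \<le> \<gamma> i"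
    and abar_nonneg: "\<forall>i<n. \<forall>j<n. 0 \<le> abar i j"
    and G_sc: "strongly_connected n \<beta>"
    and Gbar_sc: "strongly_connected n abar"
    and init: "\<forall>i<n. 0 \<le> s 0 i \<and> s 0 i \<le> 1 \<and> 0 \<le> x 0 i \<and> x 0 i \<le> 1
                    \<and> 0 \<le> opn 0 i \<and> opn 0 i \<le> 1 \<and> s 0 i + x 0 i \<le> 1"
    and ds: "\<forall>t\<ge>0. \<forall>i<n. ((\<lambda>\<tau>. s \<tau> i) has_real_derivative
               (- s t i * (\<Sum>j<n. Bmat n \<beta> \<beta>min (opn t) $$ (i, j) * x t j))) (at t within {0..})"
    and dx: "\<forall>t\<ge>0. \<forall>i<n. ((\<lambda>\<tau>. x \<tau> i) has_real_derivative
               (s t i * (\<Sum>j<n. Bmat n \<beta> \<beta>min (opn t) $$ (i, j) * x t j)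
                - Gmat n \<gamma> \<gamma>min (opn t) $$ (i, i) * x t i)) (at t within {0..})"
    and dopn: "\<forall>t\<ge>0. \<forall>i<n. ((\<lambda>\<tau>. opn \<tau> i) has_real_derivative
               ((1 - s t i) - ((\<Sum>j<n. abar i j) * opn t i - (\<Sum>j<n. abar i j * opn t j)) - opn t i))
               (at t within {0..})"
    and t_nonneg: "0 \<le> t"
  shows "Rrep n \<beta> \<beta>min \<gamma> \<gamma>min (s t) (\<lambda>_. 1) \<le> Rrep n \<beta> \<beta>min \<gamma> \<gamma>min (s t) (opn t)
       \<and> Rrep n \<beta> \<beta>min \<gamma> \<gamma>min (s t) (opn t) \<le> Rrep n \<beta> \<beta>min \<gamma> \<gamma>min (s t) (\<lambda>_. 0)"
proof -
  define bv where "bv = (\<lambda>(o1::real) i j. if \<beta> i j > 0 then \<beta> i j - (\<beta> i j - \<beta>min) * o1 else 0)"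
  have Bent: "Bmat n \<beta> \<beta>min o1 $$ (i,j) = bv (o1 i) i j" if "i<n" "j<n" for o1 i j
    using that unfolding Bmat_def bv_def by simp
  have Gent: "Gmat n \<gamma> \<gamma>min o1 $$ (i,i) = \<gamma>min + (\<gamma> i - \<gamma>min) * o1 i" if "i<n" for o1 i
    using that unfolding Gmat_def mat_diag_def by simp
  define f where "f t i = (\<Sum>j<n. Bmat n \<beta> \<beta>min (opn t) $$ (i, j) * x t j)" for t i
  have f_eq: "f t i = (\<Sum>j<n. bv (opn t i) i j * x t j)" if "i<n" for t i
    unfolding f_def using that by (intro sum.cong) (auto simp: Bent)
  have cs: "continuous_on {0..} (\<lambda>t. s t i)" if "i<n" for i by (rule deriv_cont[OF ds that])
  have cx: "continuous_on {0..} (\<lambda>t. x t i)" if "i<n" for i by (rule deriv_cont[OF dx that])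
  have co: "continuous_on {0..} (\<lambda>t. opn t i)" if "i<n" for i by (rule deriv_cont[OF dopn that])
  have cbv: "continuous_on {0..} (\<lambda>t. bv (opn t i) i j)" if "i<n" for i j
    unfolding bv_def by (cases "\<beta> i j > 0") (auto intro!: continuous_intros co that)
  have cf: "continuous_on {0..} (\<lambda>t. f t i)" if i: "i<n" for i
  proof -
    have "continuous_on {0..} (\<lambda>t. \<Sum>j<n. bv (opn t i) i j * x t j)"
      by (intro continuous_intros cbv cx i) auto
    then show ?thesis using f_eq[OF i] by simp
  qed
  have sub: "continuous_on {0..T} h" if "continuous_on {0..} h" for T and h :: "real \<Rightarrow> real"
    using that by (rule continuous_on_subset) auto
  have s_nn: "0 \<le> s t i" if "0 \<le> t" "i < n" for t i
  proof (rule pos_inv[where y = s and y' = "\<lambda>t i. - s t i * f t i"])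
    show "\<forall>t\<ge>0. \<forall>i<n. ((\<lambda>\<tau>. s \<tau> i) has_real_derivative - s t i * f t i) (at t within {0..})"
      using ds unfolding f_def by simp
    show "\<forall>i<n. 0 \<le> s 0 i" using init by simp
    show "\<forall>T\<ge>0. \<exists>K\<ge>0. \<forall>t\<in>{0..T}. \<forall>i<n. \<forall>c>0. (\<forall>j<n. - c \<le> s t j) \<longrightarrow> s t i = - c \<longrightarrow> - K * c \<le> - s t i * f t i"
    proof (intro allI impI)
      fix T :: real assume "0 \<le> T"
      obtain K where K: "K \<ge> 0" "\<forall>t\<in>{0..T}. \<forall>i<n. \<bar>f t i\<bar> \<le> K"
        using bnd[of n T f] cf sub by blast
      show "\<exists>K\<ge>0. \<forall>t\<in>{0..T}. \<forall>i<n. \<forall>c>0. (\<forall>j<n. - c \<le> s t j) \<longrightarrow> s t i = - c \<longrightarrow> - K * c \<le> - s t i * f t i"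
      proof (intro exI[of _ K] conjI ballI allI impI)
        fix t i c assume t: "t \<in> {0..T}" and i: "i < n" and c: "c > 0" and "s t i = - c"
        then have "- s t i * f t i = c * f t i" by simp
        moreover have "- K * c \<le> c * f t i"
        proof -
          have "\<bar>f t i\<bar> \<le> K" using K(2) t i by blast
          then have "-K \<le> f t i" by linarith
          then have "c * (-K) \<le> c * f t i" using c by (intro mult_left_mono) auto
          then show ?thesis by (simp add: algebra_simps)
        qed
        ultimately show "- K * c \<le> - s t i * f t i" by simp
      qed (use K in auto)
    qed
  qed (use that in auto)
  define dO where "dO t i = ((1 - s t i) - ((\<Sum>j<n. abar i j) * opn t i - (\<Sum>j<n. abar i j * opn t j)) - opn t i)" for t i
  have o_le: "opn t i \<le> 1" if "0 \<le> t" "i < n" for t i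
  proof -
    have "0 \<le> 1 - opn t i"
    proof (rule pos_inv[where y = "\<lambda>t i. 1 - opn t i" and y' = "\<lambda>t i. - dO t i"])
      show "\<forall>t\<ge>0. \<forall>i<n. ((\<lambda>\<tau>. 1 - opn \<tau> i) has_real_derivative - dO t i) (at t within {0..})"
        using dopn unfolding dO_def by (auto intro!: derivative_eq_intros)
      show "\<forall>i<n. 0 \<le> 1 - opn 0 i" using init by simp
      show "\<forall>T\<ge>0. \<exists>K\<ge>0. \<forall>t\<in>{0..T}. \<forall>i<n. \<forall>c>0. (\<forall>j<n. - c \<le> 1 - opn t j) \<longrightarrow> 1 - opn t i = - c \<longrightarrow> - K * c \<le> - dO t i"
      proof (intro allI impI exI[of _ 0] conjI ballI)
        fix T t i c assume t: "t \<in> {0..T}" and i: "i < n" and c: "c > 0" and hj: "\<forall>j<n. - c \<le> 1 - opn t j" and hi: "1 - opn t i = - c"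
        have "(\<Sum>j<n. abar i j * opn t j) \<le> (\<Sum>j<n. abar i j * (1 + c))"
          using hj abar_nonneg i by (intro sum_mono mult_left_mono) auto
        then have h1: "(\<Sum>j<n. abar i j * opn t j) \<le> (\<Sum>j<n. abar i j) * (1 + c)"
          by (simp add: sum_distrib_right)
        have oi: "opn t i = 1 + c" using hi by simp
        have s0: "0 \<le> s t i" using s_nn t i by auto
        have "dO t i = 1 - s t i - ((\<Sum>j<n. abar i j) * (1 + c) - (\<Sum>j<n. abar i j * opn t j)) - (1 + c)"
          unfolding dO_def oi by simp
        then have "dO t i \<le> 0" using h1 s0 c by linarith
        then show "- 0 * c \<le> - dO t i" by simp
      qed simp
    qed (use that in auto)
    then show ?thesis by simp
  qed
  have bv_nn: "0 \<le> bv (opn t i) i j" if "0 \<le> t" "i<n" "j<n" for t i j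
  proof -
    have "(\<beta> i j - \<beta>min) * opn t i \<le> (\<beta> i j - \<beta>min) * 1" if bp: "\<beta> i j > 0"
    proof -
      have "\<beta>min \<le> \<beta> i j" using beta_cases bp \<open>i<n\<close> \<open>j<n\<close> by force
      moreover have "opn t i \<le> 1" using o_le \<open>0 \<le> t\<close> \<open>i<n\<close> by blast
      ultimately show ?thesis by (intro mult_left_mono) auto
    qed
    then show ?thesis unfolding bv_def using beta_min_pos by auto
  qed
  define dX where "dX t i = s t i * f t i - (\<gamma>min + (\<gamma> i - \<gamma>min) * opn t i) * x t i" for t i
  have x_nn: "0 \<le> x t i" if "0 \<le> t" "i < n" for t i
  proof (rule pos_inv[where y = x and y' = dX])
    show "\<forall>t\<ge>0. \<forall>i<n. ((\<lambda>\<tau>. x \<tau> i) has_real_derivative dX t i) (at t within {0..})"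
      using dx unfolding dX_def f_def by (simp add: Gent)
    show "\<forall>i<n. 0 \<le> x 0 i" using init by simp
    show "\<forall>T\<ge>0. \<exists>K\<ge>0. \<forall>t\<in>{0..T}. \<forall>i<n. \<forall>c>0. (\<forall>j<n. - c \<le> x t j) \<longrightarrow> x t i = - c \<longrightarrow> - K * c \<le> dX t i"
    proof (intro allI impI)
      fix T :: real assume "0 \<le> T"
      define F where "F t i = \<bar>s t i * (\<Sum>j<n. bv (opn t i) i j)\<bar> + \<bar>\<gamma>min + (\<gamma> i - \<gamma>min) * opn t i\<bar>" for t i
      have "\<forall>i<n. continuous_on {0..T} (\<lambda>t. F t i)"
        unfolding F_def by (auto intro!: continuous_intros sub cs co cbv)
      then obtain K where K: "K \<ge> 0" "\<forall>t\<in>{0..T}. \<forall>i<n. \<bar>F t i\<bar> \<le> K"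
        using bnd[of n T F] by blast
      show "\<exists>K\<ge>0. \<forall>t\<in>{0..T}. \<forall>i<n. \<forall>c>0. (\<forall>j<n. - c \<le> x t j) \<longrightarrow> x t i = - c \<longrightarrow> - K * c \<le> dX t i"
      proof (intro exI[of _ K] conjI ballI allI impI)
        fix t i c assume t: "t \<in> {0..T}" and i: "i < n" and c: "c > 0" and hj: "\<forall>j<n. - c \<le> x t j" and hi: "x t i = - c"
        have s0: "0 \<le> s t i" using s_nn t i by auto
        have "(\<Sum>j<n. bv (opn t i) i j * (- c)) \<le> (\<Sum>j<n. bv (opn t i) i j * x t j)"
          using hj bv_nn t i by (intro sum_mono mult_left_mono) auto
        then have "s t i * (\<Sum>j<n. bv (opn t i) i j * (- c)) \<le> s t i * f t i"
          using s0 f_eq[OF i] by (simp add: mult_left_mono)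
        moreover have "(\<Sum>j<n. bv (opn t i) i j * (- c)) = (\<Sum>j<n. bv (opn t i) i j) * (- c)"
          by (rule sum_distrib_right[symmetric])
        ultimately have A: "- c * (s t i * (\<Sum>j<n. bv (opn t i) i j)) \<le> s t i * f t i"
          by (simp add: algebra_simps)
        have B: "- c * \<bar>\<gamma>min + (\<gamma> i - \<gamma>min) * opn t i\<bar> \<le> - (\<gamma>min + (\<gamma> i - \<gamma>min) * opn t i) * x t i"
        proof -
          obtain g where g: "g = \<gamma>min + (\<gamma> i - \<gamma>min) * opn t i" by blast
          have "c * (-g) \<le> c * \<bar>g\<bar>" using c by (intro mult_left_mono) auto
          then show ?thesis unfolding g[symmetric] using hi by (simp add: algebra_simps)
        qed
        have C: "s t i * (\<Sum>j<n. bv (opn t i) i j) + \<bar>\<gamma>min + (\<gamma> i - \<gamma>min) * opn t i\<bar> \<le> K"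
        proof -
          have "\<bar>F t i\<bar> \<le> K" using K(2) t i by blast
          then have "F t i \<le> K" by linarith
          moreover have "s t i * (\<Sum>j<n. bv (opn t i) i j) \<le> \<bar>s t i * (\<Sum>j<n. bv (opn t i) i j)\<bar>" by (rule abs_ge_self)
          ultimately show ?thesis unfolding F_def by linarith
        qed
        have "- K * c \<le> - c * (s t i * (\<Sum>j<n. bv (opn t i) i j) + \<bar>\<gamma>min + (\<gamma> i - \<gamma>min) * opn t i\<bar>)"
          using C c by (simp add: mult_left_mono)
        also have "\<dots> \<le> dX t i" using A B unfolding dX_def by (simp add: algebra_simps)
        finally show "- K * c \<le> dX t i" .
      qed (use K in auto)
    qed
  qed (use that in auto)
  have f_nn: "0 \<le> f t i" if "0 \<le> t" "i < n" for t i
    using f_eq[OF that(2)] bv_nn x_nn that by (auto intro!: sum_nonneg)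
  have s_le: "s t i \<le> 1" if "0 \<le> t" "i < n" for t i
  proof -
    have "0 \<le> 1 - s t i"
    proof (rule pos_inv[where y = "\<lambda>t i. 1 - s t i" and y' = "\<lambda>t i. s t i * f t i"])
      show "\<forall>t\<ge>0. \<forall>i<n. ((\<lambda>\<tau>. 1 - s \<tau> i) has_real_derivative s t i * f t i) (at t within {0..})"
        using ds unfolding f_def by (auto intro!: derivative_eq_intros)
      show "\<forall>i<n. 0 \<le> 1 - s 0 i" using init by simp
      show "\<forall>T\<ge>0. \<exists>K\<ge>0. \<forall>t\<in>{0..T}. \<forall>i<n. \<forall>c>0. (\<forall>j<n. - c \<le> 1 - s t j) \<longrightarrow> 1 - s t i = - c \<longrightarrow> - K * c \<le> s t i * f t i"
        using s_nn f_nn by (intro allI impI exI[of _ 0]) auto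
    qed (use that in auto)
    then show ?thesis by simp
  qed
  have o_nn: "0 \<le> opn t i" if "0 \<le> t" "i < n" for t i
  proof (rule pos_inv[where y = opn and y' = dO])
    show "\<forall>t\<ge>0. \<forall>i<n. ((\<lambda>\<tau>. opn \<tau> i) has_real_derivative dO t i) (at t within {0..})"
      using dopn unfolding dO_def by simp
    show "\<forall>i<n. 0 \<le> opn 0 i" using init by simp
    show "\<forall>T\<ge>0. \<exists>K\<ge>0. \<forall>t\<in>{0..T}. \<forall>i<n. \<forall>c>0. (\<forall>j<n. - c \<le> opn t j) \<longrightarrow> opn t i = - c \<longrightarrow> - K * c \<le> dO t i"
    proof (intro allI impI exI[of _ 0] conjI ballI)
      fix T t i c assume t: "t \<in> {0..T}" and i: "i < n" and c: "c > 0" and hj: "\<forall>j<n. - c \<le> opn t j" and hi: "opn t i = - c"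
      have "(\<Sum>j<n. abar i j * (- c)) \<le> (\<Sum>j<n. abar i j * opn t j)"
        using hj abar_nonneg i by (intro sum_mono mult_left_mono) auto
      then have h1: "(\<Sum>j<n. abar i j) * (- c) \<le> (\<Sum>j<n. abar i j * opn t j)"
        by (simp only: sum_distrib_right)
      have s1: "s t i \<le> 1" using s_le t i by auto
      have "dO t i = 1 - s t i - ((\<Sum>j<n. abar i j) * (- c) - (\<Sum>j<n. abar i j * opn t j)) - (- c)"
        unfolding dO_def hi by simp
      then have "0 \<le> dO t i" using h1 s1 c by linarith
      then show "- 0 * c \<le> dO t i" by simp
    qed simp
  qed (use that in auto)
  define M where "M o1 = Ginv n \<gamma> \<gamma>min o1 * mat_diag n (s t) * Bmat n \<beta> \<beta>min o1" for o1
  have Mc: "M o1 \<in> carrier_mat n n" for o1 unfolding M_def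
    by (intro mult_carrier_mat[of _ n n]) (auto simp: Ginv_def Bmat_def)
  have Ment: "M o1 $$ (i,j) = 1 / (\<gamma>min + (\<gamma> i - \<gamma>min) * o1 i) * s t i * (if \<beta> i j > 0 then \<beta> i j - (\<beta> i j - \<beta>min) * o1 i else 0)"
    if "i<n" "j<n" for o1 i j
  proof -
    have "M o1 = mat_diag n (\<lambda>i. 1 / (\<gamma>min + (\<gamma> i - \<gamma>min) * o1 i) * s t i) * Bmat n \<beta> \<beta>min o1"
      unfolding M_def Ginv_def by simp
    also have "\<dots> = mat n n (\<lambda>(i,j). 1 / (\<gamma>min + (\<gamma> i - \<gamma>min) * o1 i) * s t i * Bmat n \<beta> \<beta>min o1 $$ (i,j))"
      by (rule mat_diag_mult_left) (simp add: Bmat_def)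
    finally show ?thesis using that by (simp add: Bmat_def)
  qed
  have R: "Rrep n \<beta> \<beta>min \<gamma> \<gamma>min (s t) o1 = rho (M o1)" for o1 unfolding Rrep_def M_def by simp
  have ent: "0 \<le> M (\<lambda>_. b) $$ (i,j) \<and> M (\<lambda>_. b) $$ (i,j) \<le> M (\<lambda>_. a) $$ (i,j)" if "0 \<le> a" "a \<le> b" "b \<le> 1" "i<n" "j<n" for a b i j
    unfolding Ment[OF that(4,5)] using entry_mono[OF that(1-3) gamma_min_pos _ beta_min_pos, of "\<gamma> i" "\<beta> i j" "s t i"]
      gamma_ge beta_cases s_nn t_nonneg that by auto
  have ent2: "0 \<le> M o2 $$ (i,j) \<and> M o2 $$ (i,j) \<le> M o1 $$ (i,j)"
    if "0 \<le> o1 i" "o1 i \<le> o2 i" "o2 i \<le> 1" "i<n" "j<n" for o1 o2 i j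
    unfolding Ment[OF that(4,5)] using entry_mono[OF that(1-3) gamma_min_pos _ beta_min_pos, of "\<gamma> i" "\<beta> i j" "s t i"]
      gamma_ge beta_cases s_nn t_nonneg that by auto
  have "rho (M (\<lambda>_. 1)) \<le> rho (M (opn t))"
    using ent2[of "opn t" _ "\<lambda>_. 1"] o_nn o_le t_nonneg
    by (intro rho_mono[OF Mc Mc n_pos]) auto
  moreover have "rho (M (opn t)) \<le> rho (M (\<lambda>_. 0))"
    using ent2[of "\<lambda>_. 0" _ "opn t"] o_nn o_le t_nonneg
    by (intro rho_mono[OF Mc Mc n_pos]) auto
  ultimately show ?thesis unfolding R by simp
qed

end
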